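(* Let $p,q\in\mathbb{R}$ with $q\neq0$ and $$\hat{\mathcal{B}}=\begin{pmatrix}p&qi&\frac{q}{6}(\sqrt5\,k+2\ell)\\ -qi&p&\frac q2 j\\ -\frac q6(\sqrt5\,k+2\ell)&-\frac q2 j&p\end{pmatrix},\qquad w_1=\begin{pmatrix}3k\\ \sqrt5 j-2i\ell\\ -7-\sqrt5 k\ell\end{pmatrix}.$$ There do not exist nonzero $u,v\in\mathbb{O}^3$ and $\mu,\nu\in\mathbb{O}$ with $\hat{\mathcal{B}}u=u\mu$, $\hat{\mathcal{B}}v=v\nu$ such that the three vectors $w_1,u,v$ are pairwise orthogonal in the sense that $(xx^\dagger)y=0$ for every ordered pair $(x,y)$ of distinct vectors among $w_1,u,v$.
   Context: $\mathbb{O}$ is the octonion algebra with real basis $1,i,j,k,\ell,i\ell,j\ell,k\ell$, obtained by Cayley–Dickson doubling of the quaternions ($ij=k$, $jk=i$, $ki=j$): $(a+b\ell)(c+d\ell)=(ac-\overline{d}b)+(da+b\overline{c})\ell$ for quaternions $a,b,c,d$. $xx^\dagger$ is the $3\times3$ matrix with entries $x_i\overline{x_j}$, and $(xx^\dagger)y$ is the matrix–vector product computed with octonionic multiplication. $u\mu$ means componentwise right multiplication. *)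

theory Defs
  imports Complex_Main
begin

datatype quat = Q real real real real

instantiation quat :: "{zero, one, plus, minus, uminus, times}"
begin
definition "0 = Q 0 0 0 0"
definition "1 = Q 1 0 0 0"
fun plus_quat where "Q a b c d + Q a' b' c' d' = Q (a+a') (b+b') (c+c') (d+d')"
fun minus_quat where "Q a b c d - Q a' b' c' d' = Q (a-a') (b-b') (c-c') (d-d')"
fun uminus_quat where "- Q a b c d = Q (-a) (-b) (-c) (-d)"
fun times_quat where
  "Q a1 b1 c1 d1 * Q a2 b2 c2 d2 =
     Q (a1*a2 - b1*b2 - c1*c2 - d1*d2)
       (a1*b2 + b1*a2 + c1*d2 - d1*c2)
       (a1*c2 - b1*d2 + c1*a2 + d1*b2)
       (a1*d2 + b1*c2 - c1*b2 + d1*a2)"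
instance ..
end

fun qconj :: "quat \<Rightarrow> quat" where
  "qconj (Q a b c d) = Q a (-b) (-c) (-d)"

section \<open>Octonions by Cayley--Dickson doubling: (a + b l)(c + d l) = (ac - conj(d) b) + (da + b conj(c)) l\<close>

datatype oct = Oct quat quat

instantiation oct :: "{zero, one, plus, minus, uminus, times}"
begin
definition "0 = Oct 0 0"
definition "1 = Oct 1 0"
fun plus_oct where "Oct a b + Oct c d = Oct (a + c) (b + d)"
fun minus_oct where "Oct a b - Oct c d = Oct (a - c) (b - d)"
fun uminus_oct where "- Oct a b = Oct (-a) (-b)"
fun times_oct where "Oct a b * Oct c d = Oct (a*c - qconj d * b) (d*a + b * qconj c)"
instance ..
end

fun oconj :: "oct \<Rightarrow> oct" where
  "oconj (Oct a b) = Oct (qconj a) (- b)"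

text \<open>Octonion with real coordinates w.r.t. the basis 1,i,j,k,l,il,jl,kl.
  (Note (a + 0 l)(0 + 1 l) = a l, so the coordinates of a l are in the second quaternion.)\<close>
definition ov :: "real \<Rightarrow> real \<Rightarrow> real \<Rightarrow> real \<Rightarrow> real \<Rightarrow> real \<Rightarrow> real \<Rightarrow> real \<Rightarrow> oct" where
  "ov r0 r1 r2 r3 r4 r5 r6 r7 = Oct (Q r0 r1 r2 r3) (Q r4 r5 r6 r7)"

datatype idx = I1 | I2 | I3

type_synonym ovec = "idx \<Rightarrow> oct"
type_synonym omat = "idx \<Rightarrow> idx \<Rightarrow> oct"

definition mvmul :: "omat \<Rightarrow> ovec \<Rightarrow> ovec" where
  "mvmul A y = (\<lambda>i. A i I1 * y I1 + A i I2 * y I2 + A i I3 * y I3)"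

text \<open>x x^dagger : entries x_i conj(x_j)\<close>
definition outer :: "ovec \<Rightarrow> omat" where
  "outer x = (\<lambda>i j. x i * oconj (x j))"

definition rsmul :: "ovec \<Rightarrow> oct \<Rightarrow> ovec" where
  "rsmul u \<mu> = (\<lambda>i. u i * \<mu>)"

definition orth :: "ovec \<Rightarrow> ovec \<Rightarrow> bool" where
  "orth x y \<longleftrightarrow> mvmul (outer x) y = (\<lambda>_. 0)"

definition Bhat :: "real \<Rightarrow> real \<Rightarrow> omat" where
  "Bhat p q = (\<lambda>i j. case (i, j) of
      (I1, I1) \<Rightarrow> ov p 0 0 0 0 0 0 0
    | (I1, I2) \<Rightarrow> ov 0 q 0 0 0 0 0 0
    | (I1, I3) \<Rightarrow> ov 0 0 0 (q/6 * sqrt 5) (q/6 * 2) 0 0 0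
    | (I2, I1) \<Rightarrow> ov 0 (-q) 0 0 0 0 0 0
    | (I2, I2) \<Rightarrow> ov p 0 0 0 0 0 0 0
    | (I2, I3) \<Rightarrow> ov 0 0 (q/2) 0 0 0 0 0
    | (I3, I1) \<Rightarrow> ov 0 0 0 (-(q/6) * sqrt 5) (-(q/6) * 2) 0 0 0
    | (I3, I2) \<Rightarrow> ov 0 0 (-(q/2)) 0 0 0 0 0
    | (I3, I3) \<Rightarrow> ov p 0 0 0 0 0 0 0)"

definition w1 :: ovec where
  "w1 = (\<lambda>i. case i of
      I1 \<Rightarrow> ov 0 0 0 3 0 0 0 0
    | I2 \<Rightarrow> ov 0 0 (sqrt 5) 0 0 (-2) 0 0
    | I3 \<Rightarrow> ov (-7) 0 0 0 0 0 0 (- sqrt 5))"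

end

theory Submission
  imports Defs
begin


fun onorm2 :: "oct \<Rightarrow> real" where
  "onorm2 (Oct (Q a b c d) (Q e f g h)) = a*a+b*b+c*c+d*d+e*e+f*f+g*g+h*h"

fun oscale :: "real \<Rightarrow> oct \<Rightarrow> oct" where
  "oscale r (Oct (Q a b c d) (Q e f g h)) = Oct (Q (r*a) (r*b) (r*c) (r*d)) (Q (r*e) (r*f) (r*g) (r*h))"

lemma oct_cases8: obtains a b c d e f g h where "x = Oct (Q a b c d) (Q e f g h)"
  by (metis oct.exhaust quat.exhaust)

lemma onorm2_mult: "onorm2 ((x::oct)*y) = onorm2 x * onorm2 y"
proof -
  obtain a b c d e f g h where x: "x = Oct (Q a b c d) (Q e f g h)" by (rule oct_cases8)
  obtain a' b' c' d' e' f' g' h' where y: "y = Oct (Q a' b' c' d') (Q e' f' g' h')" by (rule oct_cases8)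
  show ?thesis unfolding x y by simp algebra
qed

lemma oconj_mult: "oconj x * (x*y) = oscale (onorm2 x) y"
proof -
  obtain a b c d e f g h where x: "x = Oct (Q a b c d) (Q e f g h)" by (rule oct_cases8)
  obtain a' b' c' d' e' f' g' h' where y: "y = Oct (Q a' b' c' d') (Q e' f' g' h')" by (rule oct_cases8)
  show ?thesis unfolding x y by (simp; algebra)
qed

lemma onorm2_scale: "onorm2 (oscale c x) = c*c*onorm2 x"
proof -
  obtain a b c d e f g h where x: "x = Oct (Q a b c d) (Q e f g h)" by (rule oct_cases8)
  show ?thesis unfolding x by (simp; algebra)
qed

lemma oscale_add: "oscale a x + oscale b x = oscale (a+b) x"
proof -
  obtain a b c d e f g h where x: "x = Oct (Q a b c d) (Q e f g h)" by (rule oct_cases8)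
  show ?thesis unfolding x by (simp add: algebra_simps)
qed

lemma mult_oscale: "x * oscale c z = oscale c (x*z)"
proof -
  obtain a b c d e f g h where x: "x = Oct (Q a b c d) (Q e f g h)" by (rule oct_cases8)
  obtain a' b' c' d' e' f' g' h' where y: "z = Oct (Q a' b' c' d') (Q e' f' g' h')" by (rule oct_cases8)
  show ?thesis unfolding x y by (simp add: algebra_simps)
qed

lemma mult_diff: "(x::oct) * (z - w) = x*z - x*w"
proof -
  obtain a b c d e f g h where x: "x = Oct (Q a b c d) (Q e f g h)" by (rule oct_cases8)
  obtain a' b' c' d' e' f' g' h' where y: "z = Oct (Q a' b' c' d') (Q e' f' g' h')" by (rule oct_cases8)
  obtain a2 b2 c2 d2 e2 f2 g2 h2 where m: "w = Oct (Q a2 b2 c2 d2) (Q e2 f2 g2 h2)" by (rule oct_cases8)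
  show ?thesis unfolding x y m by (simp add: algebra_simps)
qed

lemma mult_scale1: "x * oscale p 1 = oscale p x"
proof -
  obtain a b c d e f g h where x: "x = Oct (Q a b c d) (Q e f g h)" by (rule oct_cases8)
  show ?thesis unfolding x by (simp add: one_oct_def one_quat_def zero_quat_def algebra_simps)
qed

lemma add_diff_oct: "(x::oct) = z + w \<Longrightarrow> x - z = w"
proof -
  obtain a b c d e f g h where x: "x = Oct (Q a b c d) (Q e f g h)" by (rule oct_cases8)
  obtain a' b' c' d' e' f' g' h' where y: "z = Oct (Q a' b' c' d') (Q e' f' g' h')" by (rule oct_cases8)
  obtain a2 b2 c2 d2 e2 f2 g2 h2 where m: "w = Oct (Q a2 b2 c2 d2) (Q e2 f2 g2 h2)" by (rule oct_cases8)
  show "x = z + w \<Longrightarrow> x - z = w" unfolding x y m by (simp add: algebra_simps)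
qed

lemma oscale_inv: "q \<noteq> 0 \<Longrightarrow> oscale (1/q) (oscale q y) = y"
proof -
  obtain a b c d e f g h where x: "y = Oct (Q a b c d) (Q e f g h)" by (rule oct_cases8)
  show "q \<noteq> 0 \<Longrightarrow> oscale (1/q) (oscale q y) = y" unfolding x by simp
qed

lemma eig_conv:
  assumes "q \<noteq> 0" "x * \<mu> = oscale p x + oscale q y"
  shows "y = x * oscale (1/q) (\<mu> - oscale p 1)"
proof -
  have "x * oscale (1/q) (\<mu> - oscale p 1) = oscale (1/q) (x*\<mu> - x * oscale p 1)"
    by (simp only: mult_oscale mult_diff)
  also have "\<dots> = oscale (1/q) (oscale q y)"
    using assms(2) by (simp only: mult_scale1 add_diff_oct)
  also have "\<dots> = y" using assms(1) by (rule oscale_inv)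
  finally show ?thesis by simp
qed

lemma bhat_split: "mvmul (Bhat p q) u i = oscale p (u i) + oscale q (mvmul (Bhat 0 1) u i)"
proof -
  obtain a b c d e f g h where x: "u I1 = Oct (Q a b c d) (Q e f g h)" by (rule oct_cases8)
  obtain a' b' c' d' e' f' g' h' where y: "u I2 = Oct (Q a' b' c' d') (Q e' f' g' h')" by (rule oct_cases8)
  obtain a2 b2 c2 d2 e2 f2 g2 h2 where m: "u I3 = Oct (Q a2 b2 c2 d2) (Q e2 f2 g2 h2)" by (rule oct_cases8)
  show ?thesis by (cases i) (simp_all add: mvmul_def Bhat_def ov_def x y m algebra_simps)
qed


lemma s5: "sqrt 5 * (sqrt 5 * x) = 5 * x" "sqrt 5 * sqrt 5 = 5"
  by (simp_all add: mult.assoc[symmetric])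

lemma modr: "(x::real) - y = (sqrt 5 * sqrt 5 - 5) * h \<Longrightarrow> x = y"
  by simp

lemma modr2: "(x::real) - y = (r*r - 5) * h \<Longrightarrow> r * r = 5 \<Longrightarrow> x = y"
  by simp

lemma helper3: "3*x*y + b = 0 \<Longrightarrow> 0 \<le> b \<Longrightarrow> x*y \<le> (0::real)"
  by linarith

lemma octeq: "a0 = b0 \<Longrightarrow> a1 = b1 \<Longrightarrow> a2 = b2 \<Longrightarrow> a3 = b3 \<Longrightarrow> a4 = b4 \<Longrightarrow> a5 = b5 \<Longrightarrow> a6 = b6 \<Longrightarrow> a7 = b7 \<Longrightarrow>
  Oct (Q a0 a1 a2 a3) (Q a4 a5 a6 a7) = Oct (Q b0 b1 b2 b3) (Q b4 b5 b6 b7)"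
  by simp

definition uP :: "real \<Rightarrow> real \<Rightarrow> ovec" where
  "uP e g = (\<lambda>i. case i of
      I1 \<Rightarrow> Oct (Q 0 0 (1/3 * sqrt 5 * e) (3/2 * g)) (Q 0 (-(2/3) * e) 0 0)
    | I2 \<Rightarrow> Oct (Q 0 0 (-(1/2) * sqrt 5 * g) e) (Q 0 g 0 0)
    | I3 \<Rightarrow> Oct (Q 0 0 0 0) (Q 0 0 0 0))"

lemma sos_id: fixes pa pb pc pd pe pf pg pk :: real
  shows "(12*pa*pa + 12*pa*pb + 7*pb*pb + (108/5)*pc*pc - 54*pc*pd + (315/4)*pd*pd + 10*pe*pe - 60*pe*pf + 210*pf*pf + (9/2)*pg*pg + 54*pg*pk + 378*pk*pk) * (13*pa*pa + (43/3)*pa*pb + (31/3)*pb*pb + (117/5)*pc*pc - (105/2)*pc*pd + (405/4)*pd*pd + 10*pe*pe - 60*pe*pf + 270*pf*pf + (9/2)*pg*pg + 54*pg*pk + 558*pk*pk) - (5*(- 4*pa*pa - 4*pa*pb + pb*pb - (36/5)*pc*pc + 18*pc*pd + (45/4)*pd*pd - (10/3)*pe*pe + 20*pe*pf + 30*pf*pf - (3/2)*pg*pg - 18*pg*pk + 54*pk*pk)^2 + 5*(pa*pd - (2/5)*pb*pc + pb*pd + 12*pf*pk)^2 + 5*(- (4/3)*pa*pe + (19/3)*pa*pf - (4/9)*pb*pe + pb*pf - (6/5)*pc*pg - 3*pc*pk + 2*pd*pg - (9/2)*pd*pk)^2 + 5*((2/3)*pa*pg + pa*pk + (2/3)*pb*pg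 - (4/3)*pc*pe + 7*pc*pf)^2 + (- (14/3)*pa*pg - 31*pa*pk - (8/3)*pb*pg + (28/3)*pc*pe - 25*pc*pf - 10*pd*pe)^2 + (- (20/3)*pa*pe + (55/3)*pa*pf - (40/9)*pb*pe + 5*pb*pf - 6*pc*pg - 39*pc*pk + 5*pd*pg - (45/2)*pd*pk)^2 + ((5/2)*pa*pd - pb*pc + (5/2)*pb*pd + 30*pf*pk)^2 + (- pa*pb - (9/2)*pc*pd + (45/4)*pd*pd + (20/3)*pe*pe - 40*pe*pf + 30*pf*pf + 3*pg*pg + 36*pg*pk)^2) = 3*(pa^2+pb^2+pc^2+pd^2+pf^2+pk^2)*(pa^2+pb^2+pc^2+pd^2+pf^2+pk^2+pe^2+pg^2) + (73 * (pa*pa + (84/73)*pa*pb + (239/730)*pb*pb - (2017/3650)*pc*pc + (1013/730)*pc*pd - (1589/1825)*pd*pd - (559/2628)*pe*pf + (3167/10950)*pf*pf + (12/365)*pg*pk)^2 + (71373/365) * (pa*pb + (229217/428238)*pb*pb + (9923/713730)*pc*pc - (15961/142746)*pc*pd + (175931/5709840)*pd*pd - (444926/1927071)*pe*pf + (2305819/4282380)*pf*pf + (23228/71373)*pg*pk + (114172/71373)*pk*pk)^2 + (15602873/32117850) * (pb*pb - (1277949/78014365)*pc*pc + (316386789/62411492)*pc*pd - (14223239421/1248229840)*pd*pd - (6045637795/561703428)*pe*pf + (4799190647/312057460)*pf*pf + (126911388/15602873)*pg*pk - (117811704/15602873)*pk*pk)^2 + (430853986358/1950359125) * (pc*pc -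 (7715262147475/3446831890864)*pc*pd + (7759687140789/6893663781728)*pd*pd - (2277613365895/15510743508888)*pe*pf + (1917417790157/5170247836296)*pf*pf - (43663822545/861707972716)*pg*pk - (101427402972/215426993179)*pk*pk)^2 + (2894139692742729479/689366378172800) * (pc*pd - (7016757629206444919/5788279385485458958)*pd*pd + (248163657370669430/8682419078228188437)*pe*pf - (329531047560420402/2894139692742729479)*pf*pf - (159520597117956220/2894139692742729479)*pg*pk - (1041246155430193856/2894139692742729479)*pk*pk)^2 + (119127977174767418499575207/185224940335534686656000) * (pd*pd - (57585158790959981983952860/357383931524302255498725621)*pe*pf - (44687062971251901638069564/357383931524302255498725621)*pf*pf + (507677384429618224309520/119127977174767418499575207)*pg*pk - (164955426879114547033729024/119127977174767418499575207)*pk*pk)^2 + (3069717522250074092755200191531221/578961969069369653907935506020) * (pe*pf - (716044650309193117064520944754090/236132117096159545596553860887017)*pf*pf + (83396444816996683193049718500441/3069717522250074092755200191531221)*pg*pk + (30188247455873600647396673173848/3069717522250074092755200191531221)*pk*pk)^2 + (120578561681839423307401515448157807624/53129726346635897759224618699578825) * (pf*pf + (29148733329763517445601698106640258265/241157123363678846614803030896315615248)*pg*pk - (107513551947958341487538723434817814909/241157123363678846614803030896315615248)*pk*pk)^2 + (154108239690783957564586571707437556943937071/31350426037278250059924394016521029982240) * (pg*pk + (943528337661715251311791314686821648253033293/154108239690783957564586571707437556943937071)*pk*pk)^2 + (142885161496181652149883014886267341446765449022281/15410823969078395756458657170743755694393707100) * (pk*pk)^2 + (8707/25) * (pa*pc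 - (20365/17414)*pa*pd + (9745/17414)*pb*pc - (5515/8707)*pb*pd + (305/17414)*pe*pk + (165/17414)*pf*pg + (5/17414)*pf*pk)^2 + (2022025209/870700) * (pa*pd + (3432885/674008403)*pb*pc + (4200271865/8088100836)*pb*pd - (694033975/6066075627)*pe*pk - (68559595/2022025209)*pf*pg + (258438515/2022025209)*pf*pk)^2 + (12320614496483/33700420150) * (pb*pc - (122633972864585/98564915971864)*pb*pd - (3810180713725/12320614496483)*pe*pk - (1117022611055/12320614496483)*pf*pg + (15589707870320/36961843489449)*pf*pk)^2 + (12658288108807975657/118277899166236800) * (pb*pd - (15183420266133863120/37974864326423926971)*pe*pk - (1544494321977373040/12658288108807975657)*pf*pg + (6100231109100293240/12658288108807975657)*pf*pk)^2 + (1261648894504943245508417/113924592979271780913) * (pe*pk - (60059975709164217404451/6308244472524716227542085)*pf*pg - (7635849278985177077457101/2523297789009886491016834)*pf*pk)^2 + (76288649954911264662021952748/31541222362623581137710425) * (pf*pg + (678270286516023133179964678985/114432974932366896993032929122)*pf*pk)^2 + (283642979049815147457085948004713949/17164946239855034548954939368300) * (pf*pk)^2 + (181/3) * (pa*pe - (6121/2172)*pa*pf + (1055/1629)*pb*pe - (30109/16290)*pb*pf + (3/905)*pc*pg + (141/905)*pc*pk - (27/1810)*pd*pg - (703/1810)*pd*pk)^2 + (11935900487/1954800) * (pa*pf - (57462940/35807701461)*pb*pe + (18694645610/35807701461)*pb*pf + (2274660/11935900487)*pc*pg + (40836780/11935900487)*pc*pk - (129283290/11935900487)*pd*pg - (857059410/11935900487)*pd*pk)^2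 + (152373186662791/966807939447) * (pb*pe - (4676846432479051/1523731866627910)*pb*pf + (104417613/227490574295)*pc*pg - (351213574846041/761865933313955)*pc*pk + (3271386469032/761865933313955)*pd*pg + (340345528504776/761865933313955)*pd*pk)^2 + (280576966567840404397/1234222811968607100) * (pb*pf - (636629196423071016/280576966567840404397)*pc*pg + (6953345416031951268/280576966567840404397)*pc*pk - (6118768804610868012/280576966567840404397)*pd*pg - (48641209915179519180/280576966567840404397)*pd*pk)^2 + (677564077465886738495097/14028848328392020219850) * (pc*pg + (1527792974354900776044183/225854692488628912831699)*pc*pk - (918814224416285724139775/903418769954515651326796)*pd*pg - (3870005174920790766286483/677564077465886738495097)*pd*pk)^2 + (47808913369750217275710453459/2258546924886289128316990) * (pc*pk - (2090692566436290950789283041/191235653479000869102841813836)*pd*pg - (62240265359011179787452280832/47808913369750217275710453459)*pd*pk)^2 + (15488579689824540824633246834020097/19123565347900086910284181383600) * (pd*pg + (92011176561635916137308513207489574/15488579689824540824633246834020097)*pd*pk)^2 + (7122092492368583535165527403045375049963/929314781389472449477994810041205820) * (pd*pk)^2 + (51/2) * (pa*pg + (1646/255)*pa*pk + (211/306)*pb*pg + (1016/255)*pb*pk - (2/255)*pc*pe + (41/255)*pc*pf + (3/85)*pd*pe - (88/255)*pd*pf)^2 + (14962792/1275) * (pa*pk + (149185/89776752)*pb*pg + (7864687/14962792)*pb*pk + (4567/29925584)*pc*pe - (53461/29925584)*pc*pf - (254417/14962792)*pd*pe + (1408883/29925584)*pd*pf)^2 + (12301175611/179553504) * (pb*pg +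 (394023233054/61505878055)*pb*pk - (58415609/61505878055)*pc*pe - (22078155421/61505878055)*pc*pf - (1317028862/184517634165)*pd*pe + (22309398179/61505878055)*pd*pf)^2 + (885333202593133/1845176341650) * (pb*pk - (7851833843267/1770666405186266)*pc*pe + (141323489561287/1770666405186266)*pc*pf - (5109281479297/139789453041021)*pd*pe + (2478831533273/93192968694014)*pd*pf)^2 + (4913097349923515089/44266660129656650) * (pc*pe - (43215528377403261692/14739292049770545267)*pc*pf - (29005477300370429651/29478584099541090534)*pd*pe + (25995760543698063407/9826194699847030178)*pd*pf)^2 + (4828633970287946488868821/442178761493116358010) * (pc*pf + (178841397188298783219473/9657267940575892977737642)*pd*pe - (12283977281228696406343929/9657267940575892977737642)*pd*pf)^2 + (1570327829355620779168898403551/869154114651830367996387780) * (pd*pe - (4610519140184901756797965470561/1570327829355620779168898403551)*pd*pf)^2 + (26923301831501974341741303449344384/7851639146778103895844492017755) * (pd*pf)^2)"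
  by algebra

lemma inP:
  assumes q: "q \<noteq> 0" and O: "orth w1 u" and E: "mvmul (Bhat p q) u = rsmul u \<mu>"
  shows "\<exists>e g. u = uP e g"
proof -
  obtain u10 u11 u12 u13 u14 u15 u16 u17 where U1: "u I1 = Oct (Q u10 u11 u12 u13) (Q u14 u15 u16 u17)" by (rule oct_cases8)
  obtain u20 u21 u22 u23 u24 u25 u26 u27 where U2: "u I2 = Oct (Q u20 u21 u22 u23) (Q u24 u25 u26 u27)" by (rule oct_cases8)
  obtain u30 u31 u32 u33 u34 u35 u36 u37 where U3: "u I3 = Oct (Q u30 u31 u32 u33) (Q u34 u35 u36 u37)" by (rule oct_cases8)
  have M: "mvmul (outer w1) u I1 = 0" "mvmul (outer w1) u I2 = 0" "mvmul (outer w1) u I3 = 0"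
    using O unfolding orth_def by (simp_all add: zero_oct_def fun_eq_iff)
  have "(9*u10 - 3*u21*sqrt 5 + 6*u26 + 21*u33 + 3*u34*sqrt 5) = 0 \<and> (9*u11 + 3*u20*sqrt 5 + 6*u27 + 21*u32 - 3*u35*sqrt 5) = 0 \<and> (9*u12 - 3*u23*sqrt 5 + 6*u24 - 21*u31 - 3*u36*sqrt 5) = 0 \<and> (9*u13 + 3*u22*sqrt 5 - 6*u25 - 21*u30 - 3*u37*sqrt 5) = 0 \<and> (9*u14 - 6*u22 - 3*u25*sqrt 5 - 3*u30*sqrt 5 + 21*u37) = 0 \<and> (9*u15 + 6*u23 + 3*u24*sqrt 5 + 3*u31*sqrt 5 - 21*u36) = 0 \<and> (9*u16 - 6*u20 + 3*u27*sqrt 5 + 3*u32*sqrt 5 + 21*u35) = 0 \<and> (9*u17 - 6*u21 - 3*u26*sqrt 5 + 3*u33*sqrt 5 - 21*u34) = 0"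
    using M(1) U1 U2 U3 by (simp add: mvmul_def outer_def w1_def ov_def zero_oct_def zero_quat_def algebra_simps)
  then have o10: "(9*u10 - 3*u21*sqrt 5 + 6*u26 + 21*u33 + 3*u34*sqrt 5) = 0" and o11: "(9*u11 + 3*u20*sqrt 5 + 6*u27 + 21*u32 - 3*u35*sqrt 5) = 0" and o12: "(9*u12 - 3*u23*sqrt 5 + 6*u24 - 21*u31 - 3*u36*sqrt 5) = 0" and o13: "(9*u13 + 3*u22*sqrt 5 - 6*u25 - 21*u30 - 3*u37*sqrt 5) = 0" and o14: "(9*u14 - 6*u22 - 3*u25*sqrt 5 - 3*u30*sqrt 5 + 21*u37) = 0" and o15: "(9*u15 + 6*u23 + 3*u24*sqrt 5 + 3*u31*sqrt 5 - 21*u36) = 0" and o16: "(9*u16 - 6*u20 + 3*u27*sqrt 5 + 3*u32*sqrt 5 + 21*u35) = 0" and o17: "(9*u17 - 6*u21 - 3*u26*sqrt 5 + 3*u33*sqrt 5 - 21*u34) = 0" by auto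
  have "(3*u11*sqrt 5 - 6*u16 + 9*u20 + 9*u32*sqrt 5 - 9*u35) = 0 \<and> (- 3*u10*sqrt 5 - 6*u17 + 9*u21 - 9*u33*sqrt 5 - 9*u34) = 0 \<and> (3*u13*sqrt 5 - 6*u14 + 9*u22 - 9*u30*sqrt 5 + 9*u37) = 0 \<and> (- 3*u12*sqrt 5 + 6*u15 + 9*u23 + 9*u31*sqrt 5 - 9*u36) = 0 \<and> (6*u12 + 3*u15*sqrt 5 + 9*u24 + 9*u31 + 9*u36*sqrt 5) = 0 \<and> (- 6*u13 - 3*u14*sqrt 5 + 9*u25 + 9*u30 + 9*u37*sqrt 5) = 0 \<and> (6*u10 - 3*u17*sqrt 5 + 9*u26 + 9*u33 - 9*u34*sqrt 5) = 0 \<and> (6*u11 + 3*u16*sqrt 5 + 9*u27 - 9*u32 - 9*u35*sqrt 5) = 0"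
    using M(2) U1 U2 U3 by (simp add: mvmul_def outer_def w1_def ov_def zero_oct_def zero_quat_def algebra_simps)
  then have o20: "(3*u11*sqrt 5 - 6*u16 + 9*u20 + 9*u32*sqrt 5 - 9*u35) = 0" and o21: "(- 3*u10*sqrt 5 - 6*u17 + 9*u21 - 9*u33*sqrt 5 - 9*u34) = 0" and o22: "(3*u13*sqrt 5 - 6*u14 + 9*u22 - 9*u30*sqrt 5 + 9*u37) = 0" and o23: "(- 3*u12*sqrt 5 + 6*u15 + 9*u23 + 9*u31*sqrt 5 - 9*u36) = 0" and o24: "(6*u12 + 3*u15*sqrt 5 + 9*u24 + 9*u31 + 9*u36*sqrt 5) = 0" and o25: "(- 6*u13 - 3*u14*sqrt 5 + 9*u25 + 9*u30 + 9*u37*sqrt 5) = 0" and o26: "(6*u10 - 3*u17*sqrt 5 + 9*u26 + 9*u33 - 9*u34*sqrt 5) = 0" and o27: "(6*u11 + 3*u16*sqrt 5 + 9*u27 - 9*u32 - 9*u35*sqrt 5) = 0" by auto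
  have "(- 21*u13 - 3*u14*sqrt 5 - 9*u22*sqrt 5 + 9*u25 + 54*u30) = 0 \<and> (- 21*u12 + 3*u15*sqrt 5 + 9*u23*sqrt 5 + 9*u24 + 54*u31) = 0 \<and> (21*u11 + 3*u16*sqrt 5 + 9*u20*sqrt 5 - 9*u27 + 54*u32) = 0 \<and> (21*u10 + 3*u17*sqrt 5 - 9*u21*sqrt 5 + 9*u26 + 54*u33) = 0 \<and> (3*u10*sqrt 5 - 21*u17 - 9*u21 - 9*u26*sqrt 5 + 54*u34) = 0 \<and> (- 3*u11*sqrt 5 + 21*u16 - 9*u20 - 9*u27*sqrt 5 + 54*u35) = 0 \<and> (- 3*u12*sqrt 5 - 21*u15 - 9*u23 + 9*u24*sqrt 5 + 54*u36) = 0 \<and> (- 3*u13*sqrt 5 + 21*u14 + 9*u22 + 9*u25*sqrt 5 + 54*u37) = 0"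
    using M(3) U1 U2 U3 by (simp add: mvmul_def outer_def w1_def ov_def zero_oct_def zero_quat_def algebra_simps)
  then have o30: "(- 21*u13 - 3*u14*sqrt 5 - 9*u22*sqrt 5 + 9*u25 + 54*u30) = 0" and o31: "(- 21*u12 + 3*u15*sqrt 5 + 9*u23*sqrt 5 + 9*u24 + 54*u31) = 0" and o32: "(21*u11 + 3*u16*sqrt 5 + 9*u20*sqrt 5 - 9*u27 + 54*u32) = 0" and o33: "(21*u10 + 3*u17*sqrt 5 - 9*u21*sqrt 5 + 9*u26 + 54*u33) = 0" and o34: "(3*u10*sqrt 5 - 21*u17 - 9*u21 - 9*u26*sqrt 5 + 54*u34) = 0" and o35: "(- 3*u11*sqrt 5 + 21*u16 - 9*u20 - 9*u27*sqrt 5 + 54*u35) = 0" and o36: "(- 3*u12*sqrt 5 - 21*u15 - 9*u23 + 9*u24*sqrt 5 + 54*u36) = 0" and o37: "(- 3*u13*sqrt 5 + 21*u14 + 9*u22 + 9*u25*sqrt 5 + 54*u37) = 0" by auto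
  have r_u10: "u10 = (- (7/3)*u26 - (7/3)*u33)"
    using o10 o17 o21 o34 s5(2) by algebra
  have r_u17: "u17 = (- (1/3)*u26*sqrt 5 - (1/3)*u33*sqrt 5)"
    using o10 o17 o21 o34 s5(2) by algebra
  have r_u21: "u21 = (- u26*sqrt 5)"
    using o10 o17 o34 s5(2) by algebra
  have r_u34: "u34 = 0"
    using o10 o17 o21 s5(2) by algebra
  have r_u11: "u11 = (- 3*u27 + (3/2)*u35*sqrt 5)"
    using o11 o16 o20 o32 s5(2) by algebra
  have r_u16: "u16 = ((3/5)*u27*sqrt 5 - (3/2)*u35)"
    using o11 o20 o32 s5(2) by algebra
  have r_u20: "u20 = ((7/5)*u27*sqrt 5)"
    using o11 o16 o32 s5(2) by algebra
  have r_u32: "u32 = (- (1/2)*u35*sqrt 5)"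
    using o11 o16 o20 s5(2) by algebra
  have r_u12: "u12 = ((1/3)*u23*sqrt 5 - 2*u36*sqrt 5)"
    using o12 o15 o24 o31 s5(2) by algebra
  have r_u15: "u15 = (- (2/3)*u23 + 4*u36)"
    using o12 o15 o24 o31 s5(2) by algebra
  have r_u24: "u24 = 0"
    using o12 o15 o31 s5(2) by algebra
  have r_u31: "u31 = (- u36*sqrt 5)"
    using o12 o15 o24 s5(2) by algebra
  have r_u13: "u13 = ((3/2)*u25 + (18/5)*u37*sqrt 5)"
    using o13 o14 o22 o30 s5(2) by algebra
  have r_u14: "u14 = 0"
    using o13 o22 o30 s5(2) by algebra
  have r_u22: "u22 = (- (1/2)*u25*sqrt 5)"
    using o13 o14 o30 s5(2) by algebra
  have r_u30: "u30 = ((7/5)*u37*sqrt 5)"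
    using o13 o14 o22 s5(2) by algebra
  define pa where "pa = u26"
  define pb where "pb = u33"
  define pc where "pc = u27"
  define pg where "pg = u25"
  define pd where "pd = u35 / sqrt 5"
  define pe where "pe = u23 / sqrt 5"
  define pf where "pf = u36 / sqrt 5"
  define pk where "pk = u37 / sqrt 5"
  have sd: "u35 = sqrt 5 * pd" "u23 = sqrt 5 * pe" "u36 = sqrt 5 * pf" "u37 = sqrt 5 * pk"
    "u26 = pa" "u33 = pb" "u27 = pc" "u25 = pg"
    by (simp_all add: pa_def pb_def pc_def pd_def pe_def pf_def pg_def pk_def)
  obtain r :: real where rdef: "sqrt 5 = r" by blast
  have rr: "r * r = 5" using rdef s5(2) by simp
  have c_u10: "u10 = (- (7/3)*pa - (7/3)*pb)"
    using r_u10 sd s5(2) by algebra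
  have c_u11: "u11 = (- 3*pc + (15/2)*pd)"
    using r_u11 sd s5(2) by algebra
  have c_u12: "u12 = ((5/3)*pe - 10*pf)"
    using r_u12 sd s5(2) by algebra
  have c_u13: "u13 = ((3/2)*pg + 18*pk)"
    using r_u13 sd s5(2) by algebra
  have c_u14: "u14 = 0"
    using r_u14 sd s5(2) by algebra
  have c_u15: "u15 = (- (2/3)*pe*sqrt 5 + 4*pf*sqrt 5)"
    using r_u15 sd s5(2) by algebra
  have c_u16: "u16 = ((3/5)*pc*sqrt 5 - (3/2)*pd*sqrt 5)"
    using r_u16 sd s5(2) by algebra
  have c_u17: "u17 = (- (1/3)*pa*sqrt 5 - (1/3)*pb*sqrt 5)"
    using r_u17 sd s5(2) by algebra
  have c_u20: "u20 = ((7/5)*pc*sqrt 5)"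
    using r_u20 sd s5(2) by algebra
  have c_u21: "u21 = (- pa*sqrt 5)"
    using r_u21 sd s5(2) by algebra
  have c_u22: "u22 = (- (1/2)*pg*sqrt 5)"
    using r_u22 sd s5(2) by algebra
  have c_u23: "u23 = (pe*sqrt 5)"
    using  sd s5(2) by algebra
  have c_u24: "u24 = 0"
    using r_u24 sd s5(2) by algebra
  have c_u25: "u25 = (pg)"
    using  sd s5(2) by algebra
  have c_u26: "u26 = (pa)"
    using  sd s5(2) by algebra
  have c_u27: "u27 = (pc)"
    using  sd s5(2) by algebra
  have c_u30: "u30 = (7*pk)"
    using r_u30 sd s5(2) by algebra
  have c_u31: "u31 = (- 5*pf)"
    using r_u31 sd s5(2) by algebra
  have c_u32: "u32 = (- (5/2)*pd)"
    using r_u32 sd s5(2) by algebra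
  have c_u33: "u33 = (pb)"
    using  sd s5(2) by algebra
  have c_u34: "u34 = 0"
    using r_u34 sd s5(2) by algebra
  have c_u35: "u35 = (pd*sqrt 5)"
    using  sd s5(2) by algebra
  have c_u36: "u36 = (pf*sqrt 5)"
    using  sd s5(2) by algebra
  have c_u37: "u37 = (pk*sqrt 5)"
    using  sd s5(2) by algebra
  have V1: "u I1 = Oct (Q (- (7/3)*pa - (7/3)*pb) (- 3*pc + (15/2)*pd) ((5/3)*pe - 10*pf) ((3/2)*pg + 18*pk)) (Q 0 (- (2/3)*pe*sqrt 5 + 4*pf*sqrt 5) ((3/5)*pc*sqrt 5 - (3/2)*pd*sqrt 5) (- (1/3)*pa*sqrt 5 - (1/3)*pb*sqrt 5))"
    unfolding U1 by (simp only: c_u10 c_u11 c_u12 c_u13 c_u14 c_u15 c_u16 c_u17)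
  have V2: "u I2 = Oct (Q ((7/5)*pc*sqrt 5) (- pa*sqrt 5) (- (1/2)*pg*sqrt 5) (pe*sqrt 5)) (Q 0 (pg) (pa) (pc))"
    unfolding U2 by (simp only: c_u20 c_u21 c_u22 c_u23 c_u24 c_u25 c_u26 c_u27)
  have V3: "u I3 = Oct (Q (7*pk) (- 5*pf) (- (5/2)*pd) (pb)) (Q 0 (pd*sqrt 5) (pf*sqrt 5) (pk*sqrt 5))"
    unfolding U3 by (simp only: c_u30 c_u31 c_u32 c_u33 c_u34 c_u35 c_u36 c_u37)
  define \<alpha> where "\<alpha> = oscale (1/q) (\<mu> - oscale p 1)"
  have AU: "mvmul (Bhat 0 1) u i = u i * \<alpha>" for i
  proof -
    have "u i * \<mu> = oscale p (u i) + oscale q (mvmul (Bhat 0 1) u i)"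
      using E bhat_split[of p q u i] unfolding rsmul_def fun_eq_iff by metis
    then show ?thesis unfolding \<alpha>_def by (rule eig_conv[OF q])
  qed
  define nu where "nu = onorm2 (u I1) + onorm2 (u I2) + onorm2 (u I3)"
  define nA where "nA = onorm2 (mvmul (Bhat 0 1) u I1) + onorm2 (mvmul (Bhat 0 1) u I2) + onorm2 (mvmul (Bhat 0 1) u I3)"
  define \<rho> where "\<rho> = oconj (u I1) * mvmul (Bhat 0 1) u I1 + oconj (u I2) * mvmul (Bhat 0 1) u I2 + oconj (u I3) * mvmul (Bhat 0 1) u I3"
  have nA1: "nA = nu * onorm2 \<alpha>" unfolding nA_def nu_def AU onorm2_mult by (simp add: algebra_simps)
  have rho1: "\<rho> = oscale nu \<alpha>" unfolding \<rho>_def nu_def AU oconj_mult oscale_add ..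
  have F0: "nu * nA - onorm2 \<rho> = 0" unfolding nA1 rho1 onorm2_scale by (simp add: algebra_simps)
  have nu2: "nu = (12*pa*pa + 12*pa*pb + 7*pb*pb + (108/5)*pc*pc - 54*pc*pd + (315/4)*pd*pd + 10*pe*pe - 60*pe*pf + 210*pf*pf + (9/2)*pg*pg + 54*pg*pk + 378*pk*pk)"
    unfolding nu_def V1 V2 V3 onorm2.simps rdef by (rule modr2[where r=r and h="((10/9)*pa*pa + (2/9)*pa*pb + (1/9)*pb*pb + (58/25)*pc*pc - (9/5)*pc*pd + (13/4)*pd*pd + (13/9)*pe*pe - (16/3)*pe*pf + 17*pf*pf + (1/4)*pg*pg + pk*pk)"], algebra, rule rr)
  have nA2: "nA = (13*pa*pa + (43/3)*pa*pb + (31/3)*pb*pb + (117/5)*pc*pc - (105/2)*pc*pd + (405/4)*pd*pd + 10*pe*pe - 60*pe*pf + 270*pf*pf + (9/2)*pg*pg + 54*pg*pk + 558*pk*pk)"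
    unfolding nA_def mvmul_def Bhat_def ov_def V1 V2 V3
    apply (simp only: rdef prod.case idx.case times_oct.simps times_quat.simps plus_oct.simps plus_quat.simps minus_quat.simps uminus_quat.simps qconj.simps oconj.simps onorm2.simps)
    by (rule modr2[where r=r and h="((319/324)*pa*pa + (1/324)*pa*pa*r*r - (25/81)*pa*pb + (1/162)*pa*pb*r*r + (103/324)*pb*pb + (1/324)*pb*pb*r*r + (263/100)*pc*pc + (1/100)*pc*pc*r*r + (1/6)*pc*pd - (1/20)*pc*pd*r*r + (511/144)*pd*pd + (13/144)*pd*pd*r*r + (112/81)*pe*pe + (1/81)*pe*pe*r*r - (79/27)*pe*pf - (4/27)*pe*pf*r*r + (719/36)*pf*pf + (17/36)*pf*pf*r*r + (1/4)*pg*pg - (7/6)*pg*pk + (391/36)*pk*pk + (1/36)*pk*pk*r*r)"], algebra, rule rr)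
  have rho2: "\<rho> = Oct (Q (sqrt 5 * (- 4*pa*pa - 4*pa*pb + pb*pb - (36/5)*pc*pc + 18*pc*pd + (45/4)*pd*pd - (10/3)*pe*pe + 20*pe*pf + 30*pf*pf - (3/2)*pg*pg - 18*pg*pk + 54*pk*pk)) (sqrt 5 * (pa*pd - (2/5)*pb*pc + pb*pd + 12*pf*pk)) (sqrt 5 * (- (4/3)*pa*pe + (19/3)*pa*pf - (4/9)*pb*pe + pb*pf - (6/5)*pc*pg - 3*pc*pk + 2*pd*pg - (9/2)*pd*pk)) (sqrt 5 * ((2/3)*pa*pg + pa*pk + (2/3)*pb*pg - (4/3)*pc*pe + 7*pc*pf))) (Q (- (14/3)*pa*pg - 31*pa*pk - (8/3)*pb*pg + (28/3)*pc*pe - 25*pc*pf - 10*pd*pe) (- (20/3)*pa*pe + (55/3)*pa*pf - (40/9)*pb*pe + 5*pb*pf - 6*pc*pg - 39*pc*pk + 5*pd*pg - (45/2)*pd*pk) ((5/2)*pa*pd - pb*pc + (5/2)*pb*pd + 30*pf*pk) (- pa*pb - (9/2)*pc*pd + (45/4)*pd*pd + (20/3)*pe*pe - 40*pe*pf + 30*pf*pf + 3*pg*pg + 36*pg*pk))"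
    unfolding \<rho>_def mvmul_def Bhat_def ov_def V1 V2 V3
    apply (simp only: rdef prod.case idx.case times_oct.simps times_quat.simps plus_oct.simps plus_quat.simps minus_quat.simps uminus_quat.simps qconj.simps oconj.simps onorm2.simps)
    apply (rule octeq)
         apply (rule modr2[where r=r and h="(- (1/5)*pc*pd*r + (1/2)*pd*pd*r - (2/9)*pe*pf*r + (4/3)*pf*pf*r)"], algebra, rule rr)
         apply (rule modr2[where r=r and h="(- (1/9)*pa*pd*r - (1/9)*pb*pd*r + (2/9)*pe*pk*r - (4/3)*pf*pk*r)"], algebra, rule rr)
         apply (rule modr2[where r=r and h="(- (1/9)*pa*pf*r - (1/9)*pb*pf*r - (1/5)*pc*pk*r + (1/2)*pd*pk*r)"], algebra, rule rr)
         apply (rule modr2[where r=r and h="0"], algebra, rule rr)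
         apply (rule modr2[where r=r and h="(- (1/3)*pa*pg + pa*pk - (1/3)*pb*pg + (6/5)*pc*pe - 2*pd*pe)"], algebra, rule rr)
         apply (rule modr2[where r=r and h="(- (2/3)*pa*pe - (4/3)*pa*pf - (2/3)*pb*pe - (1/3)*pb*pf - (3/5)*pc*pg - (3/5)*pc*pk + (3/2)*pd*pg + (3/2)*pd*pk)"], algebra, rule rr)
         apply (rule modr2[where r=r and h="((1/2)*pa*pd - (1/2)*pb*pd - (2/3)*pe*pg + 4*pf*pg - 6*pf*pk)"], algebra, rule rr)
         apply (rule modr2[where r=r and h="((1/10)*pc*pd - (1/4)*pd*pd + (4/3)*pe*pe - (62/9)*pe*pf - (2/3)*pf*pf)"], algebra, rule rr)
    done
  have rho3: "onorm2 \<rho> = 5*(- 4*pa*pa - 4*pa*pb + pb*pb - (36/5)*pc*pc + 18*pc*pd + (45/4)*pd*pd - (10/3)*pe*pe + 20*pe*pf + 30*pf*pf - (3/2)*pg*pg - 18*pg*pk + 54*pk*pk)^2 + 5*(pa*pd - (2/5)*pb*pc + pb*pd + 12*pf*pk)^2 + 5*(- (4/3)*pa*pe + (19/3)*pa*pf - (4/9)*pb*pe + pb*pf - (6/5)*pc*pg - 3*pc*pk + 2*pd*pg - (9/2)*pd*pk)^2 + 5*((2/3)*pa*pg + pa*pk + (2/3)*pb*pg - (4/3)*pc*pe + 7*pc*pf)^2 + (- (14/3)*pa*pg - 31*pa*pk - (8/3)*pb*pg + (28/3)*pc*pe - 25*pc*pf - 10*pd*pe)^2 + (- (20/3)*pa*pe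 + (55/3)*pa*pf - (40/9)*pb*pe + 5*pb*pf - 6*pc*pg - 39*pc*pk + 5*pd*pg - (45/2)*pd*pk)^2 + ((5/2)*pa*pd - pb*pc + (5/2)*pb*pd + 30*pf*pk)^2 + (- pa*pb - (9/2)*pc*pd + (45/4)*pd*pd + (20/3)*pe*pe - 40*pe*pf + 30*pf*pf + 3*pg*pg + 36*pg*pk)^2"
    unfolding rho2 onorm2.simps rdef by (rule modr2[where r=r and h="(16*pa*pa*pa*pa + 32*pa*pa*pa*pb + 8*pa*pa*pb*pb + (288/5)*pa*pa*pc*pc - 144*pa*pa*pc*pd - 89*pa*pa*pd*pd + (256/9)*pa*pa*pe*pe - (1592/9)*pa*pa*pe*pf - (1799/9)*pa*pa*pf*pf + (112/9)*pa*pa*pg*pg + (436/3)*pa*pa*pg*pk - 431*pa*pa*pk*pk - 8*pa*pb*pb*pb + (288/5)*pa*pb*pc*pc - (724/5)*pa*pb*pc*pd - 88*pa*pb*pd*pd + (752/27)*pa*pb*pe*pe - (4544/27)*pa*pb*pe*pf - (682/3)*pa*pb*pf*pf + (116/9)*pa*pb*pg*pg + (436/3)*pa*pb*pg*pk - 432*pa*pb*pk*pk + (64/45)*pa*pc*pe*pg + (16/3)*pa*pc*pe*pk - (88/15)*pa*pc*pf*pg - 24*pa*pc*pf*pk - (16/3)*pa*pd*pe*pg + 12*pa*pd*pe*pk + (76/3)*pa*pd*pf*pg - 33*pa*pd*pf*pk + pb*pb*pb*pb - (356/25)*pb*pb*pc*pc + (176/5)*pb*pb*pc*pd + (47/2)*pb*pb*pd*pd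 - (524/81)*pb*pb*pe*pe + (352/9)*pb*pb*pe*pf + 61*pb*pb*pf*pf - (23/9)*pb*pb*pg*pg - 36*pb*pb*pg*pk + 108*pb*pb*pk*pk - (32/45)*pb*pc*pe*pg + (8/3)*pb*pc*pe*pk + (104/15)*pb*pc*pf*pg - (78/5)*pb*pc*pf*pk - (16/9)*pb*pd*pe*pg + 4*pb*pd*pe*pk + 4*pb*pd*pf*pg + 15*pb*pd*pf*pk + (1296/25)*pc*pc*pc*pc - (1296/5)*pc*pc*pc*pd + 162*pc*pc*pd*pd + (448/9)*pc*pc*pe*pe - (920/3)*pc*pc*pe*pf - 383*pc*pc*pf*pf + (576/25)*pc*pc*pg*pg + (1332/5)*pc*pc*pg*pk - (3843/5)*pc*pc*pk*pk + 405*pc*pd*pd*pd - 120*pc*pd*pe*pe + 720*pc*pd*pe*pf + 1080*pc*pd*pf*pf - (294/5)*pc*pd*pg*pg - (3246/5)*pc*pd*pg*pk + 1971*pc*pd*pk*pk + (2025/16)*pd*pd*pd*pd - 75*pd*pd*pe*pe + 450*pd*pd*pe*pf + 675*pd*pd*pf*pf - (119/4)*pd*pd*pg*pg - 423*pd*pd*pg*pk + (4941/4)*pd*pd*pk*pk + (100/9)*pe*pe*pe*pe - (400/3)*pe*pe*pe*pf + 200*pe*pe*pf*pf + 10*pe*pe*pg*pg + 120*pe*pe*pg*pk - 360*pe*pe*pk*pk + 1200*pe*pf*pf*pf - 60*pe*pf*pg*pg - 720*pe*pf*pg*pk + 2160*pe*pf*pk*pk + 900*pf*pf*pf*pf - 90*pf*pf*pg*pg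 - 1080*pf*pf*pg*pk + 3384*pf*pf*pk*pk + (9/4)*pg*pg*pg*pg + 54*pg*pg*pg*pk + 162*pg*pg*pk*pk - 1944*pg*pk*pk*pk + 2916*pk*pk*pk*pk)"], algebra, rule rr)
  have E1: "3*(pa^2+pb^2+pc^2+pd^2+pf^2+pk^2)*(pa^2+pb^2+pc^2+pd^2+pf^2+pk^2+pe^2+pg^2) + (73 * (pa*pa + (84/73)*pa*pb + (239/730)*pb*pb - (2017/3650)*pc*pc + (1013/730)*pc*pd - (1589/1825)*pd*pd - (559/2628)*pe*pf + (3167/10950)*pf*pf + (12/365)*pg*pk)^2 + (71373/365) * (pa*pb + (229217/428238)*pb*pb + (9923/713730)*pc*pc - (15961/142746)*pc*pd + (175931/5709840)*pd*pd - (444926/1927071)*pe*pf + (2305819/4282380)*pf*pf + (23228/71373)*pg*pk + (114172/71373)*pk*pk)^2 + (15602873/32117850) * (pb*pb - (1277949/78014365)*pc*pc + (316386789/62411492)*pc*pd - (14223239421/1248229840)*pd*pd - (6045637795/561703428)*pe*pf + (4799190647/312057460)*pf*pf + (126911388/15602873)*pg*pk - (117811704/15602873)*pk*pk)^2 + (430853986358/1950359125) * (pc*pc - (7715262147475/3446831890864)*pc*pd + (7759687140789/6893663781728)*pd*pd - (2277613365895/15510743508888)*pe*pf + (1917417790157/5170247836296)*pf*pf - (43663822545/861707972716)*pg*pk - (101427402972/215426993179)*pk*pk)^2 + (2894139692742729479/689366378172800) * (pc*pd - (7016757629206444919/5788279385485458958)*pd*pd + (248163657370669430/8682419078228188437)*pe*pf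 - (329531047560420402/2894139692742729479)*pf*pf - (159520597117956220/2894139692742729479)*pg*pk - (1041246155430193856/2894139692742729479)*pk*pk)^2 + (119127977174767418499575207/185224940335534686656000) * (pd*pd - (57585158790959981983952860/357383931524302255498725621)*pe*pf - (44687062971251901638069564/357383931524302255498725621)*pf*pf + (507677384429618224309520/119127977174767418499575207)*pg*pk - (164955426879114547033729024/119127977174767418499575207)*pk*pk)^2 + (3069717522250074092755200191531221/578961969069369653907935506020) * (pe*pf - (716044650309193117064520944754090/236132117096159545596553860887017)*pf*pf + (83396444816996683193049718500441/3069717522250074092755200191531221)*pg*pk + (30188247455873600647396673173848/3069717522250074092755200191531221)*pk*pk)^2 + (120578561681839423307401515448157807624/53129726346635897759224618699578825) * (pf*pf + (29148733329763517445601698106640258265/241157123363678846614803030896315615248)*pg*pk - (107513551947958341487538723434817814909/241157123363678846614803030896315615248)*pk*pk)^2 + (154108239690783957564586571707437556943937071/31350426037278250059924394016521029982240) * (pg*pk + (943528337661715251311791314686821648253033293/154108239690783957564586571707437556943937071)*pk*pk)^2 + (142885161496181652149883014886267341446765449022281/15410823969078395756458657170743755694393707100) * (pk*pk)^2 + (8707/25) * (pa*pc - (20365/17414)*pa*pd + (9745/17414)*pb*pc - (5515/8707)*pb*pd + (305/17414)*pe*pk + (165/17414)*pf*pg + (5/17414)*pf*pk)^2 + (2022025209/870700) * (pa*pd + (3432885/674008403)*pb*pc + (4200271865/8088100836)*pb*pd - (694033975/6066075627)*pe*pk - (68559595/2022025209)*pf*pg + (258438515/2022025209)*pf*pk)^2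 + (12320614496483/33700420150) * (pb*pc - (122633972864585/98564915971864)*pb*pd - (3810180713725/12320614496483)*pe*pk - (1117022611055/12320614496483)*pf*pg + (15589707870320/36961843489449)*pf*pk)^2 + (12658288108807975657/118277899166236800) * (pb*pd - (15183420266133863120/37974864326423926971)*pe*pk - (1544494321977373040/12658288108807975657)*pf*pg + (6100231109100293240/12658288108807975657)*pf*pk)^2 + (1261648894504943245508417/113924592979271780913) * (pe*pk - (60059975709164217404451/6308244472524716227542085)*pf*pg - (7635849278985177077457101/2523297789009886491016834)*pf*pk)^2 + (76288649954911264662021952748/31541222362623581137710425) * (pf*pg + (678270286516023133179964678985/114432974932366896993032929122)*pf*pk)^2 + (283642979049815147457085948004713949/17164946239855034548954939368300) * (pf*pk)^2 + (181/3) * (pa*pe - (6121/2172)*pa*pf + (1055/1629)*pb*pe - (30109/16290)*pb*pf + (3/905)*pc*pg + (141/905)*pc*pk - (27/1810)*pd*pg - (703/1810)*pd*pk)^2 + (11935900487/1954800) * (pa*pf - (57462940/35807701461)*pb*pe + (18694645610/35807701461)*pb*pf + (2274660/11935900487)*pc*pg + (40836780/11935900487)*pc*pk - (129283290/11935900487)*pd*pg - (857059410/11935900487)*pd*pk)^2 + (152373186662791/966807939447) * (pb*pe - (4676846432479051/1523731866627910)*pb*pf + (104417613/227490574295)*pc*pg - (351213574846041/761865933313955)*pc*pk + (3271386469032/761865933313955)*pd*pg + (340345528504776/761865933313955)*pd*pk)^2 + (280576966567840404397/1234222811968607100) * (pb*pf - (636629196423071016/280576966567840404397)*pc*pg + (6953345416031951268/280576966567840404397)*pc*pk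 - (6118768804610868012/280576966567840404397)*pd*pg - (48641209915179519180/280576966567840404397)*pd*pk)^2 + (677564077465886738495097/14028848328392020219850) * (pc*pg + (1527792974354900776044183/225854692488628912831699)*pc*pk - (918814224416285724139775/903418769954515651326796)*pd*pg - (3870005174920790766286483/677564077465886738495097)*pd*pk)^2 + (47808913369750217275710453459/2258546924886289128316990) * (pc*pk - (2090692566436290950789283041/191235653479000869102841813836)*pd*pg - (62240265359011179787452280832/47808913369750217275710453459)*pd*pk)^2 + (15488579689824540824633246834020097/19123565347900086910284181383600) * (pd*pg + (92011176561635916137308513207489574/15488579689824540824633246834020097)*pd*pk)^2 + (7122092492368583535165527403045375049963/929314781389472449477994810041205820) * (pd*pk)^2 + (51/2) * (pa*pg + (1646/255)*pa*pk + (211/306)*pb*pg + (1016/255)*pb*pk - (2/255)*pc*pe + (41/255)*pc*pf + (3/85)*pd*pe - (88/255)*pd*pf)^2 + (14962792/1275) * (pa*pk + (149185/89776752)*pb*pg + (7864687/14962792)*pb*pk + (4567/29925584)*pc*pe - (53461/29925584)*pc*pf - (254417/14962792)*pd*pe + (1408883/29925584)*pd*pf)^2 + (12301175611/179553504) * (pb*pg + (394023233054/61505878055)*pb*pk - (58415609/61505878055)*pc*pe - (22078155421/61505878055)*pc*pf - (1317028862/184517634165)*pd*pe + (22309398179/61505878055)*pd*pf)^2 + (885333202593133/1845176341650) * (pb*pk - (7851833843267/1770666405186266)*pc*pe + (141323489561287/1770666405186266)*pc*pf - (5109281479297/139789453041021)*pd*pe + (2478831533273/93192968694014)*pd*pf)^2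 + (4913097349923515089/44266660129656650) * (pc*pe - (43215528377403261692/14739292049770545267)*pc*pf - (29005477300370429651/29478584099541090534)*pd*pe + (25995760543698063407/9826194699847030178)*pd*pf)^2 + (4828633970287946488868821/442178761493116358010) * (pc*pf + (178841397188298783219473/9657267940575892977737642)*pd*pe - (12283977281228696406343929/9657267940575892977737642)*pd*pf)^2 + (1570327829355620779168898403551/869154114651830367996387780) * (pd*pe - (4610519140184901756797965470561/1570327829355620779168898403551)*pd*pf)^2 + (26923301831501974341741303449344384/7851639146778103895844492017755) * (pd*pf)^2) = 0"
    using F0 sos_id[of pa pb pc pd pe pf pg pk] unfolding nu2 nA2 rho3 by simp
  have E2: "0 \<le> 73 * (pa*pa + (84/73)*pa*pb + (239/730)*pb*pb - (2017/3650)*pc*pc + (1013/730)*pc*pd - (1589/1825)*pd*pd - (559/2628)*pe*pf + (3167/10950)*pf*pf + (12/365)*pg*pk)^2 + (71373/365) * (pa*pb + (229217/428238)*pb*pb + (9923/713730)*pc*pc - (15961/142746)*pc*pd + (175931/5709840)*pd*pd - (444926/1927071)*pe*pf + (2305819/4282380)*pf*pf + (23228/71373)*pg*pk + (114172/71373)*pk*pk)^2 + (15602873/32117850) * (pb*pb - (1277949/78014365)*pc*pc + (316386789/62411492)*pc*pd - (14223239421/1248229840)*pd*pd - (6045637795/561703428)*pe*pf + (4799190647/312057460)*pf*pf + (126911388/15602873)*pg*pk - (117811704/15602873)*pk*pk)^2 + (430853986358/1950359125) * (pc*pc - (7715262147475/3446831890864)*pc*pd + (7759687140789/6893663781728)*pd*pd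 - (2277613365895/15510743508888)*pe*pf + (1917417790157/5170247836296)*pf*pf - (43663822545/861707972716)*pg*pk - (101427402972/215426993179)*pk*pk)^2 + (2894139692742729479/689366378172800) * (pc*pd - (7016757629206444919/5788279385485458958)*pd*pd + (248163657370669430/8682419078228188437)*pe*pf - (329531047560420402/2894139692742729479)*pf*pf - (159520597117956220/2894139692742729479)*pg*pk - (1041246155430193856/2894139692742729479)*pk*pk)^2 + (119127977174767418499575207/185224940335534686656000) * (pd*pd - (57585158790959981983952860/357383931524302255498725621)*pe*pf - (44687062971251901638069564/357383931524302255498725621)*pf*pf + (507677384429618224309520/119127977174767418499575207)*pg*pk - (164955426879114547033729024/119127977174767418499575207)*pk*pk)^2 + (3069717522250074092755200191531221/578961969069369653907935506020) * (pe*pf - (716044650309193117064520944754090/236132117096159545596553860887017)*pf*pf + (83396444816996683193049718500441/3069717522250074092755200191531221)*pg*pk + (30188247455873600647396673173848/3069717522250074092755200191531221)*pk*pk)^2 + (120578561681839423307401515448157807624/53129726346635897759224618699578825) * (pf*pf + (29148733329763517445601698106640258265/241157123363678846614803030896315615248)*pg*pk - (107513551947958341487538723434817814909/241157123363678846614803030896315615248)*pk*pk)^2 + (154108239690783957564586571707437556943937071/31350426037278250059924394016521029982240) * (pg*pk + (943528337661715251311791314686821648253033293/154108239690783957564586571707437556943937071)*pk*pk)^2 + (142885161496181652149883014886267341446765449022281/15410823969078395756458657170743755694393707100) * (pk*pk)^2 + (8707/25) * (pa*pc - (20365/17414)*pa*pd + (9745/17414)*pb*pc - (5515/8707)*pb*pd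 + (305/17414)*pe*pk + (165/17414)*pf*pg + (5/17414)*pf*pk)^2 + (2022025209/870700) * (pa*pd + (3432885/674008403)*pb*pc + (4200271865/8088100836)*pb*pd - (694033975/6066075627)*pe*pk - (68559595/2022025209)*pf*pg + (258438515/2022025209)*pf*pk)^2 + (12320614496483/33700420150) * (pb*pc - (122633972864585/98564915971864)*pb*pd - (3810180713725/12320614496483)*pe*pk - (1117022611055/12320614496483)*pf*pg + (15589707870320/36961843489449)*pf*pk)^2 + (12658288108807975657/118277899166236800) * (pb*pd - (15183420266133863120/37974864326423926971)*pe*pk - (1544494321977373040/12658288108807975657)*pf*pg + (6100231109100293240/12658288108807975657)*pf*pk)^2 + (1261648894504943245508417/113924592979271780913) * (pe*pk - (60059975709164217404451/6308244472524716227542085)*pf*pg - (7635849278985177077457101/2523297789009886491016834)*pf*pk)^2 + (76288649954911264662021952748/31541222362623581137710425) * (pf*pg + (678270286516023133179964678985/114432974932366896993032929122)*pf*pk)^2 + (283642979049815147457085948004713949/17164946239855034548954939368300) * (pf*pk)^2 + (181/3) * (pa*pe - (6121/2172)*pa*pf + (1055/1629)*pb*pe - (30109/16290)*pb*pf + (3/905)*pc*pg + (141/905)*pc*pk - (27/1810)*pd*pg - (703/1810)*pd*pk)^2 + (11935900487/1954800) * (pa*pf - (57462940/35807701461)*pb*pe + (18694645610/35807701461)*pb*pf + (2274660/11935900487)*pc*pg + (40836780/11935900487)*pc*pk - (129283290/11935900487)*pd*pg - (857059410/11935900487)*pd*pk)^2 + (152373186662791/966807939447) * (pb*pe - (4676846432479051/1523731866627910)*pb*pf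 + (104417613/227490574295)*pc*pg - (351213574846041/761865933313955)*pc*pk + (3271386469032/761865933313955)*pd*pg + (340345528504776/761865933313955)*pd*pk)^2 + (280576966567840404397/1234222811968607100) * (pb*pf - (636629196423071016/280576966567840404397)*pc*pg + (6953345416031951268/280576966567840404397)*pc*pk - (6118768804610868012/280576966567840404397)*pd*pg - (48641209915179519180/280576966567840404397)*pd*pk)^2 + (677564077465886738495097/14028848328392020219850) * (pc*pg + (1527792974354900776044183/225854692488628912831699)*pc*pk - (918814224416285724139775/903418769954515651326796)*pd*pg - (3870005174920790766286483/677564077465886738495097)*pd*pk)^2 + (47808913369750217275710453459/2258546924886289128316990) * (pc*pk - (2090692566436290950789283041/191235653479000869102841813836)*pd*pg - (62240265359011179787452280832/47808913369750217275710453459)*pd*pk)^2 + (15488579689824540824633246834020097/19123565347900086910284181383600) * (pd*pg + (92011176561635916137308513207489574/15488579689824540824633246834020097)*pd*pk)^2 + (7122092492368583535165527403045375049963/929314781389472449477994810041205820) * (pd*pk)^2 + (51/2) * (pa*pg + (1646/255)*pa*pk + (211/306)*pb*pg + (1016/255)*pb*pk - (2/255)*pc*pe + (41/255)*pc*pf + (3/85)*pd*pe - (88/255)*pd*pf)^2 + (14962792/1275) * (pa*pk + (149185/89776752)*pb*pg + (7864687/14962792)*pb*pk + (4567/29925584)*pc*pe - (53461/29925584)*pc*pf - (254417/14962792)*pd*pe + (1408883/29925584)*pd*pf)^2 + (12301175611/179553504) * (pb*pg + (394023233054/61505878055)*pb*pk - (58415609/61505878055)*pc*pe - (22078155421/61505878055)*pc*pf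 - (1317028862/184517634165)*pd*pe + (22309398179/61505878055)*pd*pf)^2 + (885333202593133/1845176341650) * (pb*pk - (7851833843267/1770666405186266)*pc*pe + (141323489561287/1770666405186266)*pc*pf - (5109281479297/139789453041021)*pd*pe + (2478831533273/93192968694014)*pd*pf)^2 + (4913097349923515089/44266660129656650) * (pc*pe - (43215528377403261692/14739292049770545267)*pc*pf - (29005477300370429651/29478584099541090534)*pd*pe + (25995760543698063407/9826194699847030178)*pd*pf)^2 + (4828633970287946488868821/442178761493116358010) * (pc*pf + (178841397188298783219473/9657267940575892977737642)*pd*pe - (12283977281228696406343929/9657267940575892977737642)*pd*pf)^2 + (1570327829355620779168898403551/869154114651830367996387780) * (pd*pe - (4610519140184901756797965470561/1570327829355620779168898403551)*pd*pf)^2 + (26923301831501974341741303449344384/7851639146778103895844492017755) * (pd*pf)^2"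
    by (intro add_nonneg_nonneg mult_nonneg_nonneg; simp)
  have le: "(pa^2+pb^2+pc^2+pd^2+pf^2+pk^2)*(pa^2+pb^2+pc^2+pd^2+pf^2+pk^2+pe^2+pg^2) \<le> 0" by (rule helper3[OF E1 E2])
  have z0: "(pa^2+pb^2+pc^2+pd^2+pf^2+pk^2) = 0"
  proof -
    have h1: "0 \<le> (pa^2+pb^2+pc^2+pd^2+pf^2+pk^2)" "(pa^2+pb^2+pc^2+pd^2+pf^2+pk^2) \<le> (pa^2+pb^2+pc^2+pd^2+pf^2+pk^2+pe^2+pg^2)" by simp_all
    have "(pa^2+pb^2+pc^2+pd^2+pf^2+pk^2) * (pa^2+pb^2+pc^2+pd^2+pf^2+pk^2+pe^2+pg^2) \<ge> (pa^2+pb^2+pc^2+pd^2+pf^2+pk^2) * (pa^2+pb^2+pc^2+pd^2+pf^2+pk^2)" using h1 by (intro mult_left_mono) auto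
    then have "(pa^2+pb^2+pc^2+pd^2+pf^2+pk^2) * (pa^2+pb^2+pc^2+pd^2+pf^2+pk^2) \<le> 0" using le by linarith
    then show ?thesis by (metis mult_eq_0_iff order_antisym zero_le_square)
  qed
  have "pa^2 = 0" "pb^2 = 0" "pc^2 = 0" "pd^2 = 0" "pf^2 = 0" "pk^2 = 0"
    using z0 zero_le_power2[of pa] zero_le_power2[of pb] zero_le_power2[of pc] zero_le_power2[of pd] zero_le_power2[of pf] zero_le_power2[of pk] by linarith+
  then have Z: "pa = 0" "pb = 0" "pc = 0" "pd = 0" "pf = 0" "pk = 0" by simp_all
  have "u = uP (sqrt 5 * pe) pg"
  proof
    fix i show "u i = uP (sqrt 5 * pe) pg i"
    proof (cases i)
      case I1
      show ?thesis unfolding I1 V1 uP_def Z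
        apply (simp only: idx.case rdef)
        apply (rule octeq)
               apply (rule modr2[where r=r and h="0"], algebra, rule rr)
               apply (rule modr2[where r=r and h="0"], algebra, rule rr)
               apply (rule modr2[where r=r and h="(- (1/3)*pe)"], algebra, rule rr)
               apply (rule modr2[where r=r and h="0"], algebra, rule rr)
               apply (rule modr2[where r=r and h="0"], algebra, rule rr)
               apply (rule modr2[where r=r and h="0"], algebra, rule rr)
               apply (rule modr2[where r=r and h="0"], algebra, rule rr)
               apply (rule modr2[where r=r and h="0"], algebra, rule rr)
        done
    next
      case I2
      show ?thesis unfolding I2 V2 uP_def Z
        apply (simp only: idx.case rdef)
        apply (rule octeq)
               apply (rule modr2[where r=r and h="0"], algebra, rule rr)
               apply (rule modr2[where r=r and h="0"], algebra, rule rr)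
               apply (rule modr2[where r=r and h="0"], algebra, rule rr)
               apply (rule modr2[where r=r and h="0"], algebra, rule rr)
               apply (rule modr2[where r=r and h="0"], algebra, rule rr)
               apply (rule modr2[where r=r and h="0"], algebra, rule rr)
               apply (rule modr2[where r=r and h="0"], algebra, rule rr)
               apply (rule modr2[where r=r and h="0"], algebra, rule rr)
        done
    next
      case I3
      show ?thesis unfolding I3 V3 uP_def Z
        apply (simp only: idx.case rdef)
        apply (rule octeq)
               apply (rule modr2[where r=r and h="0"], algebra, rule rr)
               apply (rule modr2[where r=r and h="0"], algebra, rule rr)
               apply (rule modr2[where r=r and h="0"], algebra, rule rr)
               apply (rule modr2[where r=r and h="0"], algebra, rule rr)
               apply (rule modr2[where r=r and h="0"], algebra, rule rr)
               apply (rule modr2[where r=r and h="0"], algebra, rule rr)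
               apply (rule modr2[where r=r and h="0"], algebra, rule rr)
               apply (rule modr2[where r=r and h="0"], algebra, rule rr)
        done
    qed
  qed
  then show ?thesis by blast
qed

lemma orthP:
  assumes "orth (uP e1 g1) (uP e2 g2)"
  shows "uP e1 g1 = (\<lambda>_. 0) \<or> uP e2 g2 = (\<lambda>_. 0)"
proof -
  have M: "mvmul (outer (uP e1 g1)) (uP e2 g2) I2 = 0"
    using assms unfolding orth_def by (simp add: fun_eq_iff)
  obtain r :: real where rdef: "sqrt 5 = r" by blast
  have rr: "r * r = 5" using rdef s5(2) by simp
  have "mvmul (outer (uP e1 g1)) (uP e2 g2) I2 = Oct (Q 0 0 (- e1*e1*g2*sqrt 5 - (9/4)*g1*g1*g2*sqrt 5) (2*e1*e1*e2 + (9/2)*e2*g1*g1)) (Q 0 (2*e1*e1*g2 + (9/2)*g1*g1*g2) 0 0)"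
    unfolding mvmul_def outer_def uP_def
    apply (simp only: rdef prod.case idx.case times_oct.simps times_quat.simps plus_oct.simps plus_quat.simps minus_quat.simps uminus_quat.simps qconj.simps oconj.simps onorm2.simps)
    apply (rule octeq)
           apply (rule modr2[where r=r and h="0"], algebra, rule rr)
           apply (rule modr2[where r=r and h="0"], algebra, rule rr)
           apply (rule modr2[where r=r and h="(- (1/18)*e1*e2*g1*r - (1/8)*g1*g1*g2*r)"], algebra, rule rr)
           apply (rule modr2[where r=r and h="((1/9)*e1*e1*e2 - (1/4)*e1*g1*g2 + (1/2)*e2*g1*g1)"], algebra, rule rr)
           apply (rule modr2[where r=r and h="0"], algebra, rule rr)
           apply (rule modr2[where r=r and h="((1/9)*e1*e2*g1 + (1/4)*g1*g1*g2)"], algebra, rule rr)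
           apply (rule modr2[where r=r and h="0"], algebra, rule rr)
           apply (rule modr2[where r=r and h="0"], algebra, rule rr)
    done
  with M have "(2*e1*e1*e2 + (9/2)*e2*g1*g1) = 0" "(2*e1*e1*g2 + (9/2)*g1*g1*g2) = 0" by (simp_all add: zero_oct_def zero_quat_def)
  then have "(2*e1*e1 + 9/2*g1*g1) * e2 = 0" "(2*e1*e1 + 9/2*g1*g1) * g2 = 0"
    by (simp_all add: algebra_simps)
  then show ?thesis
  proof (cases "e1 = 0 \<and> g1 = 0")
    case True
    then show ?thesis by (auto simp: uP_def fun_eq_iff zero_oct_def zero_quat_def split: idx.splits)
  next
    case False
    have "0 < 2*e1*e1 + 9/2*g1*g1"
    proof (cases "e1 = 0")
      case True
      with False have "g1 \<noteq> 0" by simp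
      then have "0 < g1*g1" by (metis not_real_square_gt_zero)
      moreover have "0 \<le> e1*e1" by simp
      ultimately show ?thesis by linarith
    next
      case False
      then have "0 < e1*e1" by (metis not_real_square_gt_zero)
      moreover have "0 \<le> g1*g1" by simp
      ultimately show ?thesis by linarith
    qed
    with \<open>(2*e1*e1 + 9/2*g1*g1) * e2 = 0\<close> \<open>(2*e1*e1 + 9/2*g1*g1) * g2 = 0\<close> have "e2 = 0" "g2 = 0" by auto
    then show ?thesis by (auto simp: uP_def fun_eq_iff zero_oct_def zero_quat_def split: idx.splits)
  qed
qed


theorem mainTheorem12:
  fixes p q :: real
  assumes "q \<noteq> 0"
  shows "\<not> (\<exists>u v :: ovec. \<exists>\<mu> \<nu> :: oct.
            u \<noteq> (\<lambda>_. 0) \<and> v \<noteq> (\<lambda>_. 0) \<and>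
            mvmul (Bhat p q) u = rsmul u \<mu> \<and> mvmul (Bhat p q) v = rsmul v \<nu> \<and>
            orth w1 u \<and> orth u w1 \<and> orth w1 v \<and> orth v w1 \<and> orth u v \<and> orth v u)"
proof
  assume "\<exists>u v :: ovec. \<exists>\<mu> \<nu> :: oct.
            u \<noteq> (\<lambda>_. 0) \<and> v \<noteq> (\<lambda>_. 0) \<and>
            mvmul (Bhat p q) u = rsmul u \<mu> \<and> mvmul (Bhat p q) v = rsmul v \<nu> \<and>
            orth w1 u \<and> orth u w1 \<and> orth w1 v \<and> orth v w1 \<and> orth u v \<and> orth v u"
  then obtain u v \<mu> \<nu> where H: "u \<noteq> (\<lambda>_. 0)" "v \<noteq> (\<lambda>_. 0)"
    "mvmul (Bhat p q) u = rsmul u \<mu>" "mvmul (Bhat p q) v = rsmul v \<nu>"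
    "orth w1 u" "orth w1 v" "orth u v" by blast
  obtain e1 g1 where u: "u = uP e1 g1" using inP[OF assms H(5) H(3)] by blast
  obtain e2 g2 where v: "v = uP e2 g2" using inP[OF assms H(6) H(4)] by blast
  show False using orthP[of e1 g1 e2 g2] H(1,2,7) unfolding u v by blast
qed

end
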